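(* For every positive integer $n$ there exists an instance of the myopic best-response dynamics described below (a graph with nonnegative embedding weights, features, a linear threshold classifier, and a scaled 2-norm cost) in which exactly one user moves in the first round and this single move triggers a cascade so that in each of the rounds $1,2,\dots,n$ some user moves.
   Context: Users $i$ have features $x_i\in\mathbb{R}^\ell$; embeddings $\phi(x_i;x_{-i})=\widetilde{w}_{ii}x_i+\sum_{j\neq i}\widetilde{w}_{ji}x_j$ with $\widetilde{w}_{ji}\ge0$ (user $j$ influences user $i$ iff $\widetilde{w}_{ji}>0$). Classifier: $h_{\theta,b}(x_i;x_{-i})=\mathrm{sign}(\theta^\top\phi(x_i;x_{-i})+b)$, $\mathrm{sign}(0)=+1$. Cost $c_\beta(x,x')=\beta\|x-x'\|_2$ for some $\beta>0$, so users move at most distance $2/\beta$. Dynamics: $x_i^{(0)}=x_i$; at each round $t\ge1$ all users update concurrently; user $i$ changes her features only if she is currently classified $-1$ and some $x'$ with $h(x';x^{(t-1)}_{-i})=+1$ has $c_\beta(x_i^{(t-1)},x')\le2$, in which case she moves to the minimum-cost such point (embedding exactly on the decision boundary); otherwise she stays. User $i$ "moves at round $t$" if $x_i^{(t)}\neq x_i^{(t-1)}$. *)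

theory Defs
  imports Complex_Main
begin

text \<open>Feature vectors in R^l are represented as functions nat => real whose support
lies in {..<l}. W j i is the weight w~_{ji} (influence of j on i).\<close>

definition supp_in :: "nat \<Rightarrow> (nat \<Rightarrow> real) \<Rightarrow> bool" where
  "supp_in l v \<longleftrightarrow> (\<forall>k\<ge>l. v k = 0)"

definition vnorm :: "nat \<Rightarrow> (nat \<Rightarrow> real) \<Rightarrow> real" where
  "vnorm l v = sqrt (\<Sum>k<l. (v k)\<^sup>2)"

definition cost :: "nat \<Rightarrow> real \<Rightarrow> (nat \<Rightarrow> real) \<Rightarrow> (nat \<Rightarrow> real) \<Rightarrow> real" where
  "cost l \<beta> x x' = \<beta> * vnorm l (\<lambda>k. x k - x' k)"

definition embed :: "nat \<Rightarrow> (nat \<Rightarrow> nat \<Rightarrow> real) \<Rightarrow> (nat \<Rightarrow> nat \<Rightarrow> real) \<Rightarrow> nat \<Rightarrow> (nat \<Rightarrow> real)" where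
  "embed m W X i = (\<lambda>k. \<Sum>j<m. W j i * X j k)"

text \<open>Classifier: True means label +1 (sign(0) = +1), False means -1.\<close>
definition classify :: "nat \<Rightarrow> (nat \<Rightarrow> real) \<Rightarrow> real \<Rightarrow> (nat \<Rightarrow> real) \<Rightarrow> bool" where
  "classify l \<theta> b v \<longleftrightarrow> (\<Sum>k<l. \<theta> k * v k) + b \<ge> 0"

definition feasible ::
  "nat \<Rightarrow> nat \<Rightarrow> (nat \<Rightarrow> nat \<Rightarrow> real) \<Rightarrow> (nat \<Rightarrow> real) \<Rightarrow> real \<Rightarrow> real
   \<Rightarrow> (nat \<Rightarrow> nat \<Rightarrow> real) \<Rightarrow> nat \<Rightarrow> (nat \<Rightarrow> real) set" where
  "feasible l m W \<theta> b \<beta> X i =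
     {x'. supp_in l x' \<and> classify l \<theta> b (embed m W (X(i := x')) i) \<and> cost l \<beta> (X i) x' \<le> 2}"

definition br_step ::
  "nat \<Rightarrow> nat \<Rightarrow> (nat \<Rightarrow> nat \<Rightarrow> real) \<Rightarrow> (nat \<Rightarrow> real) \<Rightarrow> real \<Rightarrow> real
   \<Rightarrow> (nat \<Rightarrow> nat \<Rightarrow> real) \<Rightarrow> (nat \<Rightarrow> nat \<Rightarrow> real) \<Rightarrow> bool" where
  "br_step l m W \<theta> b \<beta> X X' \<longleftrightarrow>
     (\<forall>i<m.
        if \<not> classify l \<theta> b (embed m W X i) \<and> feasible l m W \<theta> b \<beta> X i \<noteq> {}
        then X' i \<in> feasible l m W \<theta> b \<beta> X i \<and>
             (\<forall>y \<in> feasible l m W \<theta> b \<beta> X i. cost l \<beta> (X i) (X' i) \<le> cost l \<beta> (X i) y)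
        else X' i = X i)"

end

theory Submission
  imports Defs
begin

definition WW :: "nat \<Rightarrow> nat \<Rightarrow> real" where
  "WW j i = (if j = i \<or> Suc j = i then 1 else 0)"

definition XX :: "nat \<Rightarrow> nat \<Rightarrow> nat \<Rightarrow> real" where
  "XX t i = (\<lambda>k. if k = 0 \<and> t \<le> i then -2 else 0)"

lemma embed0:
  assumes "i < m"
  shows "embed m WW Y i 0 = Y i 0 + (if 0 < i then Y (i - 1) 0 else 0)"
proof -
  have "embed m WW Y i 0 = (\<Sum>j<m. (if j = i then Y j 0 else 0) + (if Suc j = i then Y j 0 else 0))"
    unfolding embed_def WW_def by (rule sum.cong) auto
  also have "\<dots> = (\<Sum>j<m. (if j = i then Y j 0 else 0)) + (\<Sum>j<m. (if j = i - 1 \<and> 0 < i then Y j 0 else 0))"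
    by (simp add: sum.distrib) (rule sum.cong, auto)
  also have "\<dots> = Y i 0 + (if 0 < i then Y (i - 1) 0 else 0)"
    using assms by (cases "0 < i") (auto simp add: sum.delta)
  finally show ?thesis .
qed

lemma classify1: "classify 1 (\<lambda>_. 1) 0 v \<longleftrightarrow> v 0 \<ge> 0"
  unfolding classify_def by simp

lemma cost1: "cost 1 1 x y = \<bar>x 0 - y 0\<bar>"
  unfolding cost_def vnorm_def by simp

lemma emb_upd:
  assumes "i < m"
  shows "embed m WW (Y(i := x')) i 0 = x' 0 + (if 0 < i then Y (i - 1) 0 else 0)"
  using embed0[OF assms, of "Y(i := x')"] by auto

lemma step: "br_step 1 m WW (\<lambda>_. 1) 0 1 (XX t) (XX (Suc t))"
  unfolding br_step_def
proof (intro allI impI)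
  fix i assume im: "i < m"
  let ?F = "feasible 1 m WW (\<lambda>_. 1) 0 1 (XX t) i"
  have F: "?F = {x'. supp_in 1 x' \<and> x' 0 + (if 0 < i then XX t (i - 1) 0 else 0) \<ge> 0
                 \<and> \<bar>XX t i 0 - x' 0\<bar> \<le> 2}"
    unfolding feasible_def classify1 cost1 emb_upd[OF im] by simp
  have E: "embed m WW (XX t) i 0 = XX t i 0 + (if 0 < i then XX t (i - 1) 0 else 0)"
    using embed0[OF im] .
  consider "i < t" | "i = t" | "t < i" by linarith
  then show "if \<not> classify 1 (\<lambda>_. 1) 0 (embed m WW (XX t) i) \<and> ?F \<noteq> {}
        then XX (Suc t) i \<in> ?F \<and>
             (\<forall>y \<in> ?F. cost 1 1 (XX t i) (XX (Suc t) i) \<le> cost 1 1 (XX t i) y)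
        else XX (Suc t) i = XX t i"
  proof cases
    case 1
    then have "classify 1 (\<lambda>_. 1) 0 (embed m WW (XX t) i)"
      unfolding classify1 E by (auto simp: XX_def)
    moreover have "XX (Suc t) i = XX t i" using 1 by (auto simp: XX_def)
    ultimately show ?thesis by simp
  next
    case 2
    have nc: "\<not> classify 1 (\<lambda>_. 1) 0 (embed m WW (XX t) i)"
      unfolding classify1 E using 2 by (auto simp: XX_def)
    have mem: "XX (Suc t) i \<in> ?F"
      unfolding F using 2 by (auto simp: XX_def supp_in_def)
    have "\<forall>y \<in> ?F. cost 1 1 (XX t i) (XX (Suc t) i) \<le> cost 1 1 (XX t i) y"
      unfolding F cost1 using 2 by (auto simp: XX_def)
    then show ?thesis using nc mem by auto
  next
    case 3
    have "?F = {}"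
      unfolding F using 3 by (auto simp: XX_def)
    moreover have "XX (Suc t) i = XX t i" using 3 by (auto simp: XX_def)
    ultimately show ?thesis by simp
  qed
qed

theorem proposition3:
  fixes n :: nat
  assumes "n > 0"
  shows "\<exists>(l::nat) (m::nat) (W::nat \<Rightarrow> nat \<Rightarrow> real) (\<theta>::nat \<Rightarrow> real) (b::real) (\<beta>::real)
            (X::nat \<Rightarrow> nat \<Rightarrow> nat \<Rightarrow> real).
           l > 0 \<and> \<beta> > 0 \<and> (\<forall>i j. W j i \<ge> 0) \<and>
           (\<forall>i<m. supp_in l (X 0 i)) \<and>
           (\<forall>t. br_step l m W \<theta> b \<beta> (X t) (X (Suc t))) \<and>
           card {i. i < m \<and> X 1 i \<noteq> X 0 i} = 1 \<and>
           (\<forall>t\<in>{1..n}. \<exists>i<m. X t i \<noteq> X (t - 1) i)"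
proof -
  have c: "{i. i < Suc n \<and> XX 1 i \<noteq> XX 0 i} = {0}"
  proof -
    have "XX 1 i \<noteq> XX 0 i \<longleftrightarrow> i = 0" for i
    proof
      assume "XX 1 i \<noteq> XX 0 i" then show "i = 0" by (auto simp: XX_def)
    next
      assume "i = 0"
      then have "XX 1 i 0 \<noteq> XX 0 i 0" by (simp add: XX_def)
      then show "XX 1 i \<noteq> XX 0 i" by metis
    qed
    then show ?thesis by auto
  qed
  have mv: "\<exists>i<Suc n. XX t i \<noteq> XX (t - 1) i" if "t \<in> {1..n}" for t
  proof -
    have "XX t (t - 1) 0 \<noteq> XX (t - 1) (t - 1) 0" using that by (auto simp: XX_def)
    then have "XX t (t - 1) \<noteq> XX (t - 1) (t - 1)" by metis
    moreover have "t - 1 < Suc n" using that by auto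
    ultimately show ?thesis by blast
  qed
  have "\<forall>i j. WW j i \<ge> 0" by (simp add: WW_def)
  moreover have "\<forall>i<Suc n. supp_in 1 (XX 0 i)" by (simp add: XX_def supp_in_def)
  ultimately show ?thesis
    using step[of "Suc n"] c mv
    by (intro exI[of _ 1] exI[of _ "Suc n"] exI[of _ WW] exI[of _ "\<lambda>_. 1"] exI[of _ 0]
        exI[of _ 1] exI[of _ XX]) simp
qed

end
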